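(* Let $n\geq1$, $0<\sigma<1/2$, and let $\Omega\subset\mathbb{R}^n$ be an open set of finite measure such that $$\big|\{x\in\Omega:\operatorname{dist}(x,\Omega^c)<\delta\}\big|=o(\delta^{2\sigma})\qquad\text{as }\delta\to0.$$ Then $$\inf_{0\not\equiv u\in C^1_c(\Omega)}\frac{I_{n,\sigma,\Omega}[u]}{\big(\int_\Omega|u|^{\frac{2n}{n-2\sigma}}dx\big)^{\frac{n-2\sigma}{n}}}=0.$$
   Context: For an open set $\Omega\subset\mathbb{R}^n$, $I_{n,\sigma,\Omega}[u]=\iint_{\Omega\times\Omega}\frac{(u(x)-u(y))^2}{|x-y|^{n+2\sigma}}\,dx\,dy$; $\Omega^c=\mathbb{R}^n\setminus\Omega$ and $|\cdot|$ denotes Lebesgue measure. *)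

theory Defs
  imports "HOL-Analysis.Analysis" "HOL-Library.Landau_Symbols"
begin

definition C1_on_UNIV :: "('a::euclidean_space \<Rightarrow> real) \<Rightarrow> bool" where
  "C1_on_UNIV u \<longleftrightarrow> (\<exists>D :: 'a \<Rightarrow> ('a \<Rightarrow>\<^sub>L real).
      (\<forall>x. (u has_derivative blinfun_apply (D x)) (at x)) \<and> continuous_on UNIV D)"

definition C1c :: "'a::euclidean_space set \<Rightarrow> ('a \<Rightarrow> real) set" where
  "C1c \<Omega> = {u. C1_on_UNIV u \<and> compact (closure {x. u x \<noteq> 0})
                  \<and> closure {x. u x \<noteq> 0} \<subseteq> \<Omega>}"

definition Iform :: "real \<Rightarrow> 'a::euclidean_space set \<Rightarrow> ('a \<Rightarrow> real) \<Rightarrow> ennreal" where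
  "Iform \<sigma> \<Omega> u = (\<integral>\<^sup>+ z. indicator (\<Omega> \<times> \<Omega>) z *
      ennreal ((u (fst z) - u (snd z))\<^sup>2 / norm (fst z - snd z) powr (real DIM('a) + 2 * \<sigma>))
      \<partial>(lborel :: ('a \<times> 'a) measure))"

definition Sobden :: "real \<Rightarrow> 'a::euclidean_space set \<Rightarrow> ('a \<Rightarrow> real) \<Rightarrow> real" where
  "Sobden \<sigma> \<Omega> u =
     (LINT x : \<Omega> | lborel. \<bar>u x\<bar> powr (2 * real DIM('a) / (real DIM('a) - 2 * \<sigma>)))
       powr ((real DIM('a) - 2 * \<sigma>) / real DIM('a))"

end

theory Submission
  imports Defs
begin


definition kern :: "real \<Rightarrow> 'a::euclidean_space \<Rightarrow> real" where
  "kern \<sigma> z = min 1 (norm z ^ 2) / norm z powr (real DIM('a) + 2 * \<sigma>)"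

lemma pow_powr_swap: "(0::real) < x \<Longrightarrow> (x ^ j) powr s = (x powr s) ^ j"
  by (simp add: powr_realpow[symmetric] powr_powr mult.commute)

lemma kernA_alg:
  fixes j n :: nat and s :: real
  shows "1 / (2 ^ j) powr (real n + s) * (2 ^ Suc j) ^ n = 2 ^ n * (inverse (2 powr s)) ^ j"
proof -
  have "(2::real) ^ j > 0" by simp
  then have "(2 ^ j) powr (real n + s) = (2 ^ j) ^ n * (2 powr s) ^ j"
    by (simp add: powr_add powr_realpow pow_powr_swap)
  moreover have "((2::real) ^ Suc j) ^ n = 2 ^ n * (2 ^ j) ^ n" by (simp only: power_Suc power_mult_distrib)
  ultimately show ?thesis by (simp add: field_simps power_inverse)
qed

lemma kernB_alg:
  fixes j n :: nat and s :: real
  shows "((1/2) ^ j) powr s / ((1/2) ^ Suc j) ^ n * ((1/2) ^ j) ^ n = 2 ^ n * ((1/2) powr s) ^ j"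
proof -
  have "((1/2::real) ^ Suc j) ^ n = (1/2)^n * ((1/2) ^ j) ^ n" by (simp only: power_Suc power_mult_distrib)
  moreover have "((1/2::real) ^ j) powr s = ((1/2) powr s) ^ j" by (rule pow_powr_swap) simp
  ultimately show ?thesis by (simp add: field_simps)
qed

lemma exists_shell_big:
  assumes "(1::real) \<le> t" shows "\<exists>j::nat. 2 ^ j \<le> t \<and> t < 2 ^ Suc j"
proof -
  have ex: "\<exists>j::nat. t < 2 ^ Suc j"
  proof -
    obtain k where "t < 2 ^ k" using real_arch_pow[of 2 t] by auto
    then have "t < 2 ^ Suc k" using power_increasing[of k "Suc k" "2::real"] by linarith
    then show ?thesis by blast
  qed
  define j where "j = (LEAST j::nat. t < 2 ^ Suc j)"
  have 1: "t < 2 ^ Suc j" unfolding j_def by (rule LeastI_ex[OF ex])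
  have 2: "2 ^ j \<le> t"
  proof (cases j)
    case 0 then show ?thesis using assms by simp
  next
    case (Suc k)
    have "\<not> t < 2 ^ Suc k" using Suc unfolding j_def
      using not_less_Least[of k] by (metis lessI)
    then show ?thesis using Suc by simp
  qed
  show ?thesis using 1 2 by blast
qed

lemma exists_shell_small:
  assumes "(0::real) < t" "t < 1" shows "\<exists>j::nat. (1/2) ^ Suc j \<le> t \<and> t < (1/2) ^ j"
proof -
  have ex: "\<exists>j::nat. (1/2) ^ Suc j \<le> t"
  proof -
    obtain k where "(1/2::real) ^ k < t" using real_arch_pow_inv[of t "1/2"] assms by auto
    then have "(1/2::real) ^ Suc k \<le> t" using power_decreasing[of k "Suc k" "1/2::real"] by linarith
    then show ?thesis by blast
  qed
  define j where "j = (LEAST j::nat. (1/2) ^ Suc j \<le> t)"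
  have 1: "(1/2) ^ Suc j \<le> t" unfolding j_def by (rule LeastI_ex[OF ex])
  have 2: "t < (1/2) ^ j"
  proof (cases j)
    case 0 then show ?thesis using assms by simp
  next
    case (Suc k)
    have "\<not> (1/2) ^ Suc k \<le> t" using Suc unfolding j_def
      using not_less_Least[of k] by (metis lessI)
    then show ?thesis using Suc by simp
  qed
  show ?thesis using 1 2 by blast
qed

lemma ennreal_le_suminf: "(f::nat \<Rightarrow> ennreal) j \<le> suminf f"
proof -
  have "f j = sum f {j}" by simp
  also have "\<dots> \<le> sum f {..<Suc j}" by (intro sum_mono2) auto
  also have "\<dots> \<le> suminf f" by (rule sum_le_suminf[OF summableI]) auto
  finally show ?thesis .
qed

lemma kern_nonneg: "kern \<sigma> z \<ge> 0"
  unfolding kern_def by (intro divide_nonneg_nonneg) auto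

lemma kern_A:
  fixes z :: "'a::euclidean_space"
  assumes "0 \<le> \<sigma>" "2 ^ j \<le> norm z"
  shows "kern \<sigma> z \<le> 1 / (2 ^ j) powr (real DIM('a) + 2 * \<sigma>)"
proof -
  let ?e = "real DIM('a) + 2 * \<sigma>"
  have pos: "(0::real) < 2 ^ j" by simp
  then have nz: "norm z > 0" using assms by linarith
  have "kern \<sigma> z \<le> 1 / norm z powr ?e"
    unfolding kern_def using nz by (intro divide_right_mono) auto
  also have "\<dots> \<le> 1 / (2 ^ j) powr ?e"
  proof (rule frac_le)
    show "(2 ^ j) powr ?e \<le> norm z powr ?e" using assms pos by (intro powr_mono2) auto
    show "0 < (2 ^ j) powr ?e" using pos by simp
  qed auto
  finally show ?thesis .
qed

lemma kern_B:
  fixes z :: "'a::euclidean_space"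
  assumes "\<sigma> < 1" "(1/2) ^ Suc j \<le> norm z" "norm z < (1/2) ^ j"
  shows "kern \<sigma> z \<le> ((1/2) ^ j) powr (2 - 2 * \<sigma>) / ((1/2) ^ Suc j) ^ DIM('a)"
proof -
  define t where "t = norm z"
  have pos: "(0::real) < (1/2) ^ Suc j" by simp
  then have t0: "t > 0" using assms t_def by linarith
  have t1: "t < 1" using assms(3) t_def
    using power_le_one[of "1/2::real" j] by linarith
  have "kern \<sigma> z = t\<^sup>2 / t powr (real DIM('a) + 2 * \<sigma>)"
  proof -
    have "t * t < 1 * 1" using mult_strict_mono[of t 1 t 1] t0 t1 by simp
    then have "min 1 (t\<^sup>2) = t\<^sup>2" by (simp add: power2_eq_square min_def)
    then show ?thesis unfolding kern_def t_def[symmetric] by simp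
  qed
  also have "t\<^sup>2 = t powr (2 - 2 * \<sigma>) * t powr (2 * \<sigma>)"
  proof -
    have "t powr (2 - 2 * \<sigma>) * t powr (2 * \<sigma>) = t powr ((2 - 2 * \<sigma>) + 2 * \<sigma>)"
      by (rule powr_add[symmetric])
    also have "\<dots> = t powr 2" by simp
    also have "\<dots> = t\<^sup>2" using t0 by (simp add: powr_numeral)
    finally show ?thesis by simp
  qed
  also have "t powr (real DIM('a) + 2 * \<sigma>) = t ^ DIM('a) * t powr (2 * \<sigma>)"
    using t0 by (simp add: powr_add powr_realpow)
  also have "t powr (2 - 2 * \<sigma>) * t powr (2 * \<sigma>) / (t ^ DIM('a) * t powr (2 * \<sigma>))
      = t powr (2 - 2 * \<sigma>) / t ^ DIM('a)" using t0 by simp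
  also have "\<dots> \<le> ((1/2) ^ j) powr (2 - 2 * \<sigma>) / ((1/2) ^ Suc j) ^ DIM('a)"
  proof (rule frac_le)
    show "0 \<le> ((1/2::real) ^ j) powr (2 - 2 * \<sigma>)" by simp
    show "t powr (2 - 2 * \<sigma>) \<le> ((1/2) ^ j) powr (2 - 2 * \<sigma>)"
      using assms t_def t0 by (intro powr_mono2) auto
    show "0 < ((1/2::real) ^ Suc j) ^ DIM('a)" by simp
    show "((1/2) ^ Suc j) ^ DIM('a) \<le> t ^ DIM('a)"
      using assms t_def by (intro power_mono) auto
  qed
  finally show ?thesis .
qed

lemma kern_integral_finite:
  assumes "0 < \<sigma>" "\<sigma> < 1"
  shows "(\<integral>\<^sup>+ z. ennreal (kern \<sigma> (z::'a::euclidean_space)) \<partial>lborel) < \<infinity>"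
proof -
  define n where "n = DIM('a)"
  define e where "e = real n + 2 * \<sigma>"
  define \<omega> where "\<omega> = unit_ball_vol (real n)"
  define A where "A j = {z::'a. 2 ^ j \<le> norm z \<and> norm z < 2 ^ Suc j}" for j :: nat
  define B where "B j = {z::'a. (1/2) ^ Suc j \<le> norm z \<and> norm z < (1/2) ^ j}" for j :: nat
  define a where "a j = 1 / (2 ^ j) powr e" for j :: nat
  define b where "b j = ((1/2) ^ j) powr (2 - 2 * \<sigma>) / ((1/2) ^ Suc j) ^ n" for j :: nat
  define g where "g j z = ennreal (a j) * indicator (A j) z + ennreal (b j) * indicator (B j) z"
    for j :: nat and z :: 'a
  have Am[measurable]: "A j \<in> sets lborel" for j unfolding A_def by measurable
  have Bm[measurable]: "B j \<in> sets lborel" for j unfolding B_def by measurable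
  have pw: "ennreal (kern \<sigma> z) \<le> (\<Sum>j. g j z)" for z :: 'a
  proof (cases "z = 0")
    case True then show ?thesis by (simp add: kern_def)
  next
    case False
    show ?thesis
    proof (cases "1 \<le> norm z")
      case True
      then obtain j where j: "2 ^ j \<le> norm z" "norm z < 2 ^ Suc j"
        using exists_shell_big by blast
      have "ennreal (kern \<sigma> z) \<le> ennreal (a j)"
        using kern_A[OF _ j(1), of \<sigma>] assms by (simp add: a_def e_def n_def)
      also have "\<dots> \<le> g j z" using j by (simp add: g_def A_def)
      also have "\<dots> \<le> (\<Sum>j. g j z)" by (rule ennreal_le_suminf)
      finally show ?thesis .
    next
      case False
      then obtain j where j: "(1/2) ^ Suc j \<le> norm z" "norm z < (1/2) ^ j"
        using exists_shell_small[of "norm z"] \<open>z \<noteq> 0\<close> by auto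
      have "ennreal (kern \<sigma> z) \<le> ennreal (b j)"
        using kern_B[OF _ j, of \<sigma>] assms by (simp add: b_def n_def)
      also have "\<dots> \<le> g j z" using j by (simp add: g_def B_def)
      also have "\<dots> \<le> (\<Sum>j. g j z)" by (rule ennreal_le_suminf)
      finally show ?thesis .
    qed
  qed
  have a0: "a j \<ge> 0" for j by (simp add: a_def)
  have b0: "b j \<ge> 0" for j by (simp add: b_def)
  define r1 where "r1 = inverse (2 powr (2 * \<sigma>))"
  define r2 where "r2 = (1/2::real) powr (2 - 2 * \<sigma>)"
  have "1 powr (2 * \<sigma>) < (2::real) powr (2 * \<sigma>)" using assms by (intro powr_less_mono2) auto
  then have r1: "0 \<le> r1" "r1 < 1" unfolding r1_def using assms by (auto simp: inverse_less_1_iff)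
  have "(1/2::real) powr (2 - 2 * \<sigma>) < 1 powr (2 - 2 * \<sigma>)" using assms by (intro powr_less_mono2) auto
  then have r2: "0 \<le> r2" "r2 < 1" unfolding r2_def by auto
  have ig: "(\<integral>\<^sup>+ z. g j z \<partial>lborel) \<le> ennreal (\<omega> * 2 ^ n * (r1 ^ j + r2 ^ j))" for j
  proof -
    have i1: "(\<integral>\<^sup>+z. ennreal (a j) * indicator (A j) z \<partial>lborel) = ennreal (a j) * emeasure lborel (A j)"
      by (rule nn_integral_cmult_indicator[OF Am])
    have i2: "(\<integral>\<^sup>+z. ennreal (b j) * indicator (B j) z \<partial>lborel) = ennreal (b j) * emeasure lborel (B j)"
      by (rule nn_integral_cmult_indicator[OF Bm])
    have "(\<integral>\<^sup>+ z. g j z \<partial>lborel) = (\<integral>\<^sup>+z. ennreal (a j) * indicator (A j) z \<partial>lborel) + (\<integral>\<^sup>+z. ennreal (b j) * indicator (B j) z \<partial>lborel)"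
      unfolding g_def by (rule nn_integral_add) auto
    also have "\<dots> = ennreal (a j) * emeasure lborel (A j) + ennreal (b j) * emeasure lborel (B j)"
      by (simp only: i1 i2)
    finally have eq: "(\<integral>\<^sup>+ z. g j z \<partial>lborel) = ennreal (a j) * emeasure lborel (A j) + ennreal (b j) * emeasure lborel (B j)" .
    have mA: "emeasure lborel (A j) \<le> ennreal (\<omega> * (2 ^ Suc j) ^ n)"
    proof -
      have "emeasure lborel (A j) \<le> emeasure lborel (ball (0::'a) (2 ^ Suc j))"
        by (intro emeasure_mono) (auto simp: A_def)
      also have "\<dots> = ennreal (\<omega> * (2 ^ Suc j) ^ n)" by (simp add: emeasure_ball \<omega>_def n_def)
      finally show ?thesis .
    qed
    have mB: "emeasure lborel (B j) \<le> ennreal (\<omega> * ((1/2) ^ j) ^ n)"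
    proof -
      have "emeasure lborel (B j) \<le> emeasure lborel (ball (0::'a) ((1/2) ^ j))"
        by (intro emeasure_mono) (auto simp: B_def)
      also have "\<dots> = ennreal (\<omega> * ((1/2) ^ j) ^ n)" by (simp add: emeasure_ball \<omega>_def n_def)
      finally show ?thesis .
    qed
    have "ennreal (a j) * emeasure lborel (A j) + ennreal (b j) * emeasure lborel (B j)
       \<le> ennreal (a j) * ennreal (\<omega> * (2 ^ Suc j) ^ n) + ennreal (b j) * ennreal (\<omega> * ((1/2) ^ j) ^ n)"
      by (intro add_mono mult_left_mono mA mB) auto
    also have "\<dots> = ennreal (a j * (\<omega> * (2 ^ Suc j) ^ n)) + ennreal (b j * (\<omega> * ((1/2) ^ j) ^ n))"
      by (simp only: ennreal_mult'[OF a0, symmetric] ennreal_mult'[OF b0, symmetric])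
    also have "\<dots> = ennreal (a j * (\<omega> * (2 ^ Suc j) ^ n) + b j * (\<omega> * ((1/2) ^ j) ^ n))"
      by (rule ennreal_plus[symmetric]) (use a0 b0 in \<open>auto simp: \<omega>_def\<close>)
    also have "a j * (\<omega> * (2 ^ Suc j) ^ n) + b j * (\<omega> * ((1/2) ^ j) ^ n) = \<omega> * (a j * (2 ^ Suc j) ^ n) + \<omega> * (b j * ((1/2) ^ j) ^ n)"
      by (simp only: mult_ac)
    also have "a j * (2 ^ Suc j) ^ n = 2 ^ n * r1 ^ j"
      unfolding a_def e_def r1_def by (rule kernA_alg)
    also have "b j * ((1/2) ^ j) ^ n = 2 ^ n * r2 ^ j"
      unfolding b_def r2_def by (rule kernB_alg)
    also have "\<omega> * (2 ^ n * r1 ^ j) + \<omega> * (2 ^ n * r2 ^ j) = \<omega> * 2 ^ n * (r1 ^ j + r2 ^ j)"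
      by (simp add: algebra_simps)
    finally show ?thesis using eq by simp
  qed
  have summ: "summable (\<lambda>j. \<omega> * 2 ^ n * (r1 ^ j + r2 ^ j))"
  proof -
    have "summable (\<lambda>j. r1 ^ j)" using r1 by (intro summable_geometric) simp
    moreover have "summable (\<lambda>j. r2 ^ j)" using r2 by (intro summable_geometric) simp
    ultimately have "summable (\<lambda>j. r1 ^ j + r2 ^ j)" by (rule summable_add)
    then show ?thesis by (rule summable_mult)
  qed
  have "(\<integral>\<^sup>+ z. ennreal (kern \<sigma> (z::'a)) \<partial>lborel) \<le> (\<integral>\<^sup>+ z. (\<Sum>j. g j z) \<partial>lborel)"
    by (rule nn_integral_mono) (rule pw)
  also have "\<dots> = (\<Sum>j. \<integral>\<^sup>+ z. g j z \<partial>lborel)"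
    by (rule nn_integral_suminf) (unfold g_def, measurable)
  also have "\<dots> \<le> (\<Sum>j. ennreal (\<omega> * 2 ^ n * (r1 ^ j + r2 ^ j)))"
    by (rule suminf_le[OF ig summableI summableI])
  also have "\<dots> = ennreal (\<Sum>j. \<omega> * 2 ^ n * (r1 ^ j + r2 ^ j))"
    by (rule suminf_ennreal2[OF _ summ]) (use r1 r2 in \<open>simp add: \<omega>_def\<close>)
  also have "\<dots> < \<infinity>" by simp
  finally show ?thesis .
qed



definition kernM :: "real \<Rightarrow> real \<Rightarrow> 'a::euclidean_space \<Rightarrow> real" where
  "kernM M \<sigma> z = min 1 (M\<^sup>2 * (norm z)\<^sup>2) / norm z powr (real DIM('a) + 2 * \<sigma>)"

lemma kernM_measurable[measurable]: "kernM M \<sigma> \<in> borel_measurable borel"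
  unfolding kernM_def by measurable

lemma kernM_scale:
  fixes z :: "'a::euclidean_space"
  assumes "M > 0"
  shows "kernM M \<sigma> z = M powr (real DIM('a) + 2 * \<sigma>) * kern \<sigma> (M *\<^sub>R z)"
proof (cases "z = 0")
  case True then show ?thesis by (simp add: kernM_def kern_def)
next
  case False
  have "norm (M *\<^sub>R z) = M * norm z" using assms by simp
  moreover have "(M * norm z) powr (real DIM('a) + 2 * \<sigma>) = M powr (real DIM('a) + 2 * \<sigma>) * norm z powr (real DIM('a) + 2 * \<sigma>)"
    using assms by (simp add: powr_mult)
  moreover have "M powr (real DIM('a) + 2 * \<sigma>) > 0" using assms by simp
  ultimately show ?thesis using False
    by (simp add: kernM_def kern_def power_mult_distrib)
qed

lemma nn_integral_scale:
  fixes f :: "'a::euclidean_space \<Rightarrow> ennreal"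
  assumes [measurable]: "f \<in> borel_measurable borel" and "c > 0"
  shows "(\<integral>\<^sup>+ x. f x \<partial>lborel) = ennreal (c ^ DIM('a)) * (\<integral>\<^sup>+ x. f (c *\<^sub>R x) \<partial>lborel)"
proof -
  have "(\<integral>\<^sup>+ x. f x \<partial>lborel) = (\<integral>\<^sup>+ x. f x \<partial>(density (distr lborel borel (\<lambda>x. 0 + c *\<^sub>R x)) (\<lambda>_. \<bar>c\<bar>^DIM('a))))"
    using lborel_affine[of c "0::'a"] assms by simp
  also have "\<dots> = (\<integral>\<^sup>+ x. ennreal (\<bar>c\<bar>^DIM('a)) * f x \<partial>(distr lborel borel (\<lambda>x. 0 + c *\<^sub>R x)))"
    by (subst nn_integral_density) auto
  also have "\<dots> = (\<integral>\<^sup>+ x. ennreal (\<bar>c\<bar>^DIM('a)) * f (0 + c *\<^sub>R x) \<partial>lborel)"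
    by (subst nn_integral_distr) auto
  also have "\<dots> = ennreal (c ^ DIM('a)) * (\<integral>\<^sup>+ x. f (c *\<^sub>R x) \<partial>lborel)"
    using assms by (subst nn_integral_cmult) auto
  finally show ?thesis .
qed

lemma kernM_integral:
  assumes "M > 0"
  shows "(\<integral>\<^sup>+ z. ennreal (kernM M \<sigma> (z::'a::euclidean_space)) \<partial>lborel)
     = ennreal (M powr (2 * \<sigma>)) * (\<integral>\<^sup>+ z. ennreal (kern \<sigma> (z::'a)) \<partial>lborel)"
proof -
  let ?e = "real DIM('a) + 2 * \<sigma>"
  have km[measurable]: "kern \<sigma> \<in> borel_measurable (borel :: 'a measure)"
    unfolding kern_def by measurable
  have "(\<integral>\<^sup>+ z. ennreal (kern \<sigma> (z::'a)) \<partial>lborel) = ennreal (M ^ DIM('a)) * (\<integral>\<^sup>+ z. ennreal (kern \<sigma> (M *\<^sub>R (z::'a))) \<partial>lborel)"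
    using assms by (intro nn_integral_scale) auto
  moreover have "(\<integral>\<^sup>+ z. ennreal (kernM M \<sigma> (z::'a)) \<partial>lborel) = ennreal (M powr ?e) * (\<integral>\<^sup>+ z. ennreal (kern \<sigma> (M *\<^sub>R (z::'a))) \<partial>lborel)"
    using assms by (simp add: kernM_scale ennreal_mult nn_integral_cmult kern_nonneg)
  moreover have "M powr ?e = M powr (2 * \<sigma>) * M ^ DIM('a)"
    using assms by (simp add: powr_add powr_realpow)
  ultimately show ?thesis using assms
    by (simp add: ennreal_mult mult_ac)
qed

lemma nn_integral_translate:
  fixes f :: "'a::euclidean_space \<Rightarrow> ennreal"
  assumes [measurable]: "f \<in> borel_measurable borel"
  shows "(\<integral>\<^sup>+ y. f (y - x) \<partial>lborel) = (\<integral>\<^sup>+ w. f w \<partial>lborel)"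
proof -
  have "(\<integral>\<^sup>+ w. f w \<partial>lborel) = (\<integral>\<^sup>+ w. f w \<partial>(distr lborel borel ((+) (- x))))"
    by (simp add: lborel_distr_plus)
  also have "\<dots> = (\<integral>\<^sup>+ y. f (- x + y) \<partial>lborel)"
    by (subst nn_integral_distr) auto
  finally show ?thesis by simp
qed



lemma kernM_sym: "kernM M \<sigma> (x - y) = kernM M \<sigma> (y - x)"
  by (simp add: kernM_def norm_minus_commute)

lemma Iform_pointwise:
  fixes u :: "'a::euclidean_space \<Rightarrow> real"
  assumes "M > 0" and lip: "\<And>x y. \<bar>u x - u y\<bar> \<le> M * dist x y" and bd: "\<And>x y. \<bar>u x - u y\<bar> \<le> 1"
  shows "(u x - u y)\<^sup>2 / norm (x - y) powr (real DIM('a) + 2 * \<sigma>) \<le> kernM M \<sigma> (x - y)"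
proof -
  have d1: "(u x - u y)\<^sup>2 \<le> 1"
    using bd[of x y] by (simp add: abs_square_le_1)
  have "\<bar>u x - u y\<bar> \<le> M * norm (x - y)" using lip[of x y] by (simp add: dist_norm)
  then have "\<bar>u x - u y\<bar>\<^sup>2 \<le> (M * norm (x - y))\<^sup>2"
    by (intro power_mono) auto
  then have d2: "(u x - u y)\<^sup>2 \<le> M\<^sup>2 * (norm (x - y))\<^sup>2" by (simp add: power_mult_distrib)
  have "(u x - u y)\<^sup>2 \<le> min 1 (M\<^sup>2 * (norm (x - y))\<^sup>2)" using d1 d2 by simp
  then show ?thesis unfolding kernM_def by (intro divide_right_mono) auto
qed

lemma Iform_bound:
  fixes u :: "'a::euclidean_space \<Rightarrow> real" and \<Omega> E :: "'a set"
  assumes "M > 0" and lip: "\<And>x y. \<bar>u x - u y\<bar> \<le> M * dist x y" and bd: "\<And>x y. \<bar>u x - u y\<bar> \<le> 1"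
    and E[measurable]: "E \<in> sets lborel"
    and const: "\<And>x y. x \<in> \<Omega> \<Longrightarrow> y \<in> \<Omega> \<Longrightarrow> x \<notin> E \<Longrightarrow> y \<notin> E \<Longrightarrow> u x = u y"
  shows "Iform \<sigma> \<Omega> u \<le> 2 * emeasure lborel E * (ennreal (M powr (2 * \<sigma>)) * (\<integral>\<^sup>+ z. ennreal (kern \<sigma> (z::'a)) \<partial>lborel))"
proof -
  define k where "k w = ennreal (kernM M \<sigma> w)" for w :: 'a
  define Kc where "Kc = (\<integral>\<^sup>+ w. k w \<partial>lborel)"
  have km[measurable]: "k \<in> borel_measurable borel" unfolding k_def by measurable
  define R1 where "R1 z = indicator E (fst z) * k (fst z - snd z)" for z :: "'a \<times> 'a"
  define R2 where "R2 z = indicator E (snd z) * k (fst z - snd z)" for z :: "'a \<times> 'a"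
  have R1m[measurable]: "R1 \<in> borel_measurable (lborel \<Otimes>\<^sub>M lborel)" unfolding R1_def by measurable
  have R2m[measurable]: "R2 \<in> borel_measurable (lborel \<Otimes>\<^sub>M lborel)" unfolding R2_def by measurable
  have pw: "indicator (\<Omega> \<times> \<Omega>) z *
      ennreal ((u (fst z) - u (snd z))\<^sup>2 / norm (fst z - snd z) powr (real DIM('a) + 2 * \<sigma>))
      \<le> R1 z + R2 z" for z :: "'a \<times> 'a"
  proof (cases "z \<in> \<Omega> \<times> \<Omega>")
    case False then show ?thesis by simp
  next
    case True
    show ?thesis
    proof (cases "fst z \<in> E \<or> snd z \<in> E")
      case False
      then have "u (fst z) = u (snd z)" using True const by (cases z) auto
      then show ?thesis by simp
    next
      case True
      have "ennreal ((u (fst z) - u (snd z))\<^sup>2 / norm (fst z - snd z) powr (real DIM('a) + 2 * \<sigma>))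
          \<le> k (fst z - snd z)"
        unfolding k_def using Iform_pointwise[OF assms(1) lip bd] by (intro ennreal_leI)
      also have "\<dots> \<le> R1 z + R2 z" using True by (auto simp: R1_def R2_def)
      finally show ?thesis by (simp add: indicator_def)
    qed
  qed
  have trans1: "(\<integral>\<^sup>+ y. k (x - y) \<partial>lborel) = Kc" for x
  proof -
    have "(\<integral>\<^sup>+ y. k (x - y) \<partial>lborel) = (\<integral>\<^sup>+ y. k (y - x) \<partial>lborel)"
      by (simp add: k_def kernM_sym)
    also have "\<dots> = Kc" unfolding Kc_def by (rule nn_integral_translate) simp
    finally show ?thesis .
  qed
  have trans2: "(\<integral>\<^sup>+ x. k (x - y) \<partial>lborel) = Kc" for y
    unfolding Kc_def by (rule nn_integral_translate) simp
  have I1: "integral\<^sup>N (lborel \<Otimes>\<^sub>M lborel) R1 = Kc * emeasure lborel E"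
  proof -
    have "integral\<^sup>N (lborel \<Otimes>\<^sub>M lborel) R1 = (\<integral>\<^sup>+ x. \<integral>\<^sup>+ y. R1 (x, y) \<partial>lborel \<partial>lborel)"
      by (rule lborel.nn_integral_fst[symmetric]) simp
    also have "\<dots> = (\<integral>\<^sup>+ x. indicator E x * (\<integral>\<^sup>+ y. k (x - y) \<partial>lborel) \<partial>lborel)"
      unfolding R1_def by (simp add: nn_integral_cmult)
    also have "\<dots> = (\<integral>\<^sup>+ x. Kc * indicator E x \<partial>lborel)"
      by (simp add: trans1 mult.commute)
    also have "\<dots> = Kc * emeasure lborel E" by (rule nn_integral_cmult_indicator[OF E])
    finally show ?thesis .
  qed
  have I2: "integral\<^sup>N (lborel \<Otimes>\<^sub>M lborel) R2 = Kc * emeasure lborel E"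
  proof -
    have "integral\<^sup>N (lborel \<Otimes>\<^sub>M lborel) R2 = (\<integral>\<^sup>+ x. \<integral>\<^sup>+ y. R2 (x, y) \<partial>lborel \<partial>lborel)"
      by (rule lborel.nn_integral_fst[symmetric]) simp
    also have "\<dots> = (\<integral>\<^sup>+ y. \<integral>\<^sup>+ x. R2 (x, y) \<partial>lborel \<partial>lborel)"
      by (rule lborel_pair.Fubini[symmetric]) simp
    also have "\<dots> = (\<integral>\<^sup>+ y. indicator E y * (\<integral>\<^sup>+ x. k (x - y) \<partial>lborel) \<partial>lborel)"
      unfolding R2_def by (simp add: nn_integral_cmult)
    also have "\<dots> = (\<integral>\<^sup>+ y. Kc * indicator E y \<partial>lborel)"
      by (simp add: trans2 mult.commute)
    also have "\<dots> = Kc * emeasure lborel E" by (rule nn_integral_cmult_indicator[OF E])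
    finally show ?thesis .
  qed
  have "Iform \<sigma> \<Omega> u \<le> (\<integral>\<^sup>+ z. R1 z + R2 z \<partial>(lborel :: ('a \<times> 'a) measure))"
    unfolding Iform_def by (rule nn_integral_mono) (rule pw)
  also have "\<dots> = (\<integral>\<^sup>+ z. R1 z + R2 z \<partial>(lborel \<Otimes>\<^sub>M lborel))"
    by (simp only: lborel_prod)
  also have "\<dots> = integral\<^sup>N (lborel \<Otimes>\<^sub>M lborel) R1 + integral\<^sup>N (lborel \<Otimes>\<^sub>M lborel) R2"
    by (rule nn_integral_add) simp_all
  also have "\<dots> = 2 * emeasure lborel E * Kc"
    by (simp add: I1 I2 mult_2 algebra_simps)
  also have "Kc = ennreal (M powr (2 * \<sigma>)) * (\<integral>\<^sup>+ z. ennreal (kern \<sigma> (z::'a)) \<partial>lborel)"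
    unfolding Kc_def k_def using assms(1) by (rule kernM_integral)
  finally show ?thesis .
qed



definition qf :: "real \<Rightarrow> real" where "qf t = (max 0 t)\<^sup>2"

lemma qf_deriv: "(qf has_real_derivative 2 * max 0 t) (at t)"
proof (cases "t = 0")
  case False
  show ?thesis
  proof (cases "t > 0")
    case True
    have ev: "eventually (\<lambda>s. qf s = s\<^sup>2) (nhds t)"
      using eventually_nhds_in_open[of "{0<..}" t] True
      by (auto elim!: eventually_mono simp: qf_def)
    have "((\<lambda>s. s\<^sup>2) has_real_derivative 2 * t) (at t)"
      by (auto intro!: derivative_eq_intros)
    then show ?thesis using True
      by (subst DERIV_cong_ev[OF refl ev]) auto
  next
    case False
    with \<open>t \<noteq> 0\<close> have neg: "t < 0" by simp
    have ev: "eventually (\<lambda>s. qf s = 0) (nhds t)"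
      using eventually_nhds_in_open[of "{..<0}" t] neg
      by (auto elim!: eventually_mono simp: qf_def)
    have "((\<lambda>s. 0::real) has_real_derivative 0) (at t)"
      by (auto intro!: derivative_eq_intros)
    then show ?thesis using neg
      by (subst DERIV_cong_ev[OF refl ev]) auto
  qed
next
  case True
  have "((\<lambda>h. (qf (0 + h) - qf 0) / h) \<longlongrightarrow> 0) (at 0)"
  proof -
    have "((\<lambda>h. max 0 h) \<longlongrightarrow> max 0 (0::real)) (at 0)"
      by (intro tendsto_intros)
    then have lim: "((\<lambda>h::real. max 0 h) \<longlongrightarrow> 0) (at 0)" by simp
    have pt: "(qf (0 + h) - qf 0) / h = max 0 h" if "h \<noteq> 0" for h :: real
    proof (cases "h > 0")
      case True then show ?thesis by (simp add: qf_def power2_eq_square)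
    next
      case False then show ?thesis by (simp add: qf_def max_def)
    qed
    have ev: "eventually (\<lambda>h. (qf (0 + h) - qf 0) / h = max 0 h) (at (0::real))"
      unfolding eventually_at_filter by (intro always_eventually allI impI pt)
    show ?thesis by (rule tendsto_cong[OF ev, THEN iffD2, OF lim])
  qed
  then show ?thesis using True by (simp add: DERIV_def)
qed

lemma qf_nonneg: "qf t \<ge> 0" by (simp add: qf_def)

lemma sep_net:
  fixes K :: "'a::metric_space set"
  assumes "compact K" "h > 0"
  shows "\<exists>P. finite P \<and> P \<subseteq> K \<and> (\<forall>x\<in>K. \<exists>p\<in>P. dist x p < h) \<and>
             (\<forall>p\<in>P. \<forall>q\<in>P. p \<noteq> q \<longrightarrow> h \<le> dist p q)"
proof -
  obtain C where C: "C \<subseteq> K" "finite C" "K \<subseteq> (\<Union>c\<in>C. ball c (h/2))"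
    using compactE_image[OF assms(1), of K "\<lambda>c. ball c (h/2)"] assms(2)
    by (metis (no_types, lifting) UN_I centre_in_ball half_gt_zero open_ball subsetI)
  define Sep where "Sep P \<longleftrightarrow> P \<subseteq> K \<and> (\<forall>p\<in>P. \<forall>q\<in>P. p \<noteq> q \<longrightarrow> h \<le> dist p q)" for P
  have bound: "finite P \<and> card P \<le> card C" if "Sep P" for P
  proof -
    have "\<forall>p\<in>P. \<exists>c\<in>C. dist p c < h/2"
      using that C(3) unfolding Sep_def by (force simp: dist_commute)
    then obtain f where f: "\<And>p. p \<in> P \<Longrightarrow> f p \<in> C \<and> dist p (f p) < h/2" by metis
    have inj: "inj_on f P"
    proof (rule inj_onI)
      fix p q assume pq: "p \<in> P" "q \<in> P" "f p = f q"
      show "p = q"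
      proof (rule ccontr)
        assume "p \<noteq> q"
        then have "h \<le> dist p q" using that pq unfolding Sep_def by auto
        moreover have "dist p q \<le> dist p (f p) + dist q (f q)"
          using pq(3) by (metis dist_commute dist_triangle)
        moreover have "dist p (f p) < h/2" using f[OF pq(1)] by blast
        moreover have "dist q (f q) < h/2" using f[OF pq(2)] by blast
        ultimately show False by linarith
      qed
    qed
    have sub: "f ` P \<subseteq> C" using f by auto
    then have "finite (f ` P)" using C(2) finite_subset by auto
    then have fin: "finite P" using inj finite_imageD by auto
    have "card P = card (f ` P)" using inj by (simp add: card_image)
    also have "\<dots> \<le> card C" using sub C(2) by (rule card_mono[rotated])
    finally show ?thesis using fin by simp
  qed
  have "Sep {}" by (simp add: Sep_def)
  then obtain P where P: "Sep P" "\<And>Q. Sep Q \<Longrightarrow> card Q \<le> card P"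
    using ex_has_greatest_nat[of Sep "{}" card "Suc (card C)"] bound by force
  have finP: "finite P" using bound P(1) by auto
  have cover: "\<exists>p\<in>P. dist x p < h" if "x \<in> K" for x
  proof (rule ccontr)
    assume "\<not> (\<exists>p\<in>P. dist x p < h)"
    then have far: "\<forall>p\<in>P. h \<le> dist x p" by auto
    then have xP: "x \<notin> P" using assms(2) by fastforce
    have "Sep (insert x P)" using P(1) far that unfolding Sep_def
      by (auto simp: dist_commute)
    then have "card (insert x P) \<le> card P" by (rule P(2))
    then show False using xP finP by simp
  qed
  have "P \<subseteq> K" "\<forall>p\<in>P. \<forall>q\<in>P. p \<noteq> q \<longrightarrow> h \<le> dist p q" using P(1) unfolding Sep_def by auto
  with finP cover show ?thesis by (intro exI[of _ P]) auto
qed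

lemma packing:
  fixes P :: "'a::euclidean_space set"
  assumes "h > 0" "finite P" and sep: "\<forall>p\<in>P. \<forall>q\<in>P. p \<noteq> q \<longrightarrow> h \<le> dist p q"
  shows "card {p\<in>P. dist x p < 2 * h} \<le> 5 ^ DIM('a)"
proof -
  define Q where "Q = {p\<in>P. dist x p < 2 * h}"
  define \<omega> where "\<omega> = unit_ball_vol (real DIM('a))"
  have \<omega>: "\<omega> > 0" by (simp add: \<omega>_def)
  have finQ: "finite Q" using assms(2) by (simp add: Q_def)
  have disj: "disjoint_family_on (\<lambda>p. ball p (h/2)) Q"
    unfolding disjoint_family_on_def
  proof (intro ballI impI)
    fix p q assume pq: "p \<in> Q" "q \<in> Q" "p \<noteq> q"
    then have "h \<le> dist p q" using sep by (auto simp: Q_def)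
    show "ball p (h/2) \<inter> ball q (h/2) = {}"
    proof (rule ccontr)
      assume "ball p (h/2) \<inter> ball q (h/2) \<noteq> {}"
      then obtain y where y: "dist p y < h/2" "dist q y < h/2" by auto
      have "dist p q \<le> dist p y + dist q y" using dist_triangle3[of p q y] by (simp add: dist_commute)
      with y \<open>h \<le> dist p q\<close> show False by linarith
    qed
  qed
  have sub: "(\<Union>p\<in>Q. ball p (h/2)) \<subseteq> ball x (5 * h / 2)"
  proof
    fix y assume "y \<in> (\<Union>p\<in>Q. ball p (h/2))"
    then obtain p where p: "p \<in> Q" "dist p y < h/2" by auto
    have "dist x y \<le> dist x p + dist p y" by (rule dist_triangle)
    then show "y \<in> ball x (5 * h / 2)" using p by (auto simp: Q_def)
  qed
  have "(\<Sum>p\<in>Q. emeasure lborel (ball p (h/2))) = emeasure lborel (\<Union>p\<in>Q. ball p (h/2))"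
    by (rule sum_emeasure) (use disj finQ in auto)
  also have "\<dots> \<le> emeasure lborel (ball x (5 * h / 2))"
    by (rule emeasure_mono[OF sub]) simp
  finally have "(\<Sum>p\<in>Q. ennreal (\<omega> * (h/2) ^ DIM('a))) \<le> ennreal (\<omega> * (5 * h / 2) ^ DIM('a))"
    using assms(1) by (simp add: emeasure_ball \<omega>_def)
  moreover have "(\<Sum>p\<in>Q. ennreal c) = ennreal (real (card Q) * c)" if "c \<ge> 0" for c
    using that by (simp add: ennreal_mult ennreal_of_nat_eq_real_of_nat)
  ultimately have "ennreal (real (card Q) * (\<omega> * (h/2) ^ DIM('a))) \<le> ennreal (\<omega> * (5 * h / 2) ^ DIM('a))"
    using \<omega> assms(1) by simp
  then have le: "real (card Q) * (\<omega> * (h/2) ^ DIM('a)) \<le> \<omega> * (5 * h / 2) ^ DIM('a)"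
    using \<omega> assms(1) by (subst (asm) ennreal_le_iff) auto
  have "(5 * h / 2) ^ DIM('a) = 5 ^ DIM('a) * (h/2) ^ DIM('a)"
    by (simp add: power_mult_distrib[symmetric])
  then have "real (card Q) * (\<omega> * (h/2) ^ DIM('a)) \<le> real (5 ^ DIM('a)) * (\<omega> * (h/2) ^ DIM('a))"
    using le by (simp add: mult_ac)
  then have "real (card Q) \<le> real (5 ^ DIM('a))"
    using \<omega> assms(1) by (subst (asm) mult_le_cancel_right_pos) auto
  then show ?thesis unfolding Q_def by linarith
qed



lemma qf_comp:
  assumes "(g has_derivative g') (at x)"
  shows "((\<lambda>y. qf (g y)) has_derivative (\<lambda>v. 2 * max 0 (g x) * g' v)) (at x)"
  using has_derivative_compose[OF assms has_field_derivative_imp_has_derivative[OF qf_deriv[of "g x"]]]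
  by simp

lemma qf_cont[continuous_intros]: "continuous_on S g \<Longrightarrow> continuous_on S (\<lambda>x. qf (g x))"
  unfolding qf_def by (intro continuous_intros)

lemma has_derivative_div_const:
  "(f has_derivative f') (at x) \<Longrightarrow> ((\<lambda>y. f y / (c::real)) has_derivative (\<lambda>v. f' v / c)) (at x)"
  using has_derivative_mult_left[of f f' "at x" "inverse c"] by (simp add: divide_inverse)

lemma inner_sq_deriv:
  fixes p :: "'a::euclidean_space"
  shows "((\<lambda>y. (y - p) \<bullet> (y - p)) has_derivative (\<lambda>v. 2 * ((x - p) \<bullet> v))) (at x)"
proof -
  have "((\<lambda>y. (y - p) \<bullet> (y - p)) has_derivative (\<lambda>v. (x - p) \<bullet> v + v \<bullet> (x - p))) (at x)"
    by (auto intro!: derivative_eq_intros)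
  then show ?thesis by (simp add: inner_commute)
qed

lemma cutoff:
  fixes K :: "'a::euclidean_space set"
  assumes "compact K" "h > 0"
  shows "\<exists>u. C1_on_UNIV u \<and> (\<forall>x\<in>K. u x = 1) \<and> (\<forall>x. 0 \<le> u x \<and> u x \<le> 1)
      \<and> (\<forall>x y. \<bar>u x - u y\<bar> \<le> (8 * 5 ^ DIM('a) / h) * dist x y)
      \<and> (\<forall>x. u x \<noteq> 0 \<longrightarrow> (\<exists>p\<in>K. dist x p < 2 * h))"
proof -
  obtain P where P: "finite P" "P \<subseteq> K" "\<And>x. x \<in> K \<Longrightarrow> \<exists>p\<in>P. dist x p < h"
    and sepP: "\<forall>p\<in>P. \<forall>q\<in>P. p \<noteq> q \<longrightarrow> h \<le> dist p q"
    using sep_net[OF assms] by blast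
  define s where "s p x = ((x - p) \<bullet> (x - p)) / h\<^sup>2" for p x :: 'a
  define \<psi> where "\<psi> x = (\<Sum>p\<in>P. qf (4 - s p x) / 9)" for x
  define u where "u x = 1 - qf (1 - \<psi> x)" for x
  define c where "c p x = 2 * max 0 (1 - \<psi> x) * (- (2 * max 0 (4 - s p x)) / 9) * (2 / h\<^sup>2)" for p x
  define D where "D x = (\<Sum>p\<in>P. c p x *\<^sub>R blinfun_inner_left (x - p))" for x
  have s_eq: "s p x = (dist x p / h)\<^sup>2" for p x
    by (simp add: s_def dist_norm power_divide power2_norm_eq_inner)
  have s0: "s p x \<ge> 0" for p x by (simp add: s_eq)
  have \<psi>0: "\<psi> x \<ge> 0" for x unfolding \<psi>_def by (intro sum_nonneg) (simp add: qf_nonneg)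
  have Dapp: "blinfun_apply (D x) v = (\<Sum>p\<in>P. c p x * ((x - p) \<bullet> v))" for x v
    by (simp add: D_def blinfun.sum_left blinfun.scaleR_left inner_commute)
  have deriv: "(u has_derivative blinfun_apply (D x)) (at x)" for x
  proof -
    have ds: "((\<lambda>y. s p y) has_derivative (\<lambda>v. 2 * ((x - p) \<bullet> v) / h\<^sup>2)) (at x)" for p
      unfolding s_def by (rule has_derivative_div_const[OF inner_sq_deriv])
    have db: "((\<lambda>y. qf (4 - s p y) / 9) has_derivative
        (\<lambda>v. 2 * max 0 (4 - s p x) * (- (2 * ((x - p) \<bullet> v) / h\<^sup>2)) / 9)) (at x)" for p
    proof -
      have "((\<lambda>y. 4 - s p y) has_derivative (\<lambda>v. - (2 * ((x - p) \<bullet> v) / h\<^sup>2))) (at x)"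
        using has_derivative_diff[OF has_derivative_const ds[of p], of 4] by simp
      from has_derivative_div_const[OF qf_comp[OF this], of 9] show ?thesis by simp
    qed
    have dpsi: "(\<psi> has_derivative (\<lambda>v. \<Sum>p\<in>P. 2 * max 0 (4 - s p x) * (- (2 * ((x - p) \<bullet> v) / h\<^sup>2)) / 9)) (at x)"
      unfolding \<psi>_def by (rule has_derivative_sum) (rule db)
    have "((\<lambda>y. 1 - \<psi> y) has_derivative (\<lambda>v. - (\<Sum>p\<in>P. 2 * max 0 (4 - s p x) * (- (2 * ((x - p) \<bullet> v) / h\<^sup>2)) / 9))) (at x)"
      using has_derivative_diff[OF has_derivative_const dpsi, of 1] by simp
    from qf_comp[OF this]
    have q: "((\<lambda>y. qf (1 - \<psi> y)) has_derivative (\<lambda>v. 2 * max 0 (1 - \<psi> x) * - (\<Sum>p\<in>P. 2 * max 0 (4 - s p x) * (- (2 * ((x - p) \<bullet> v) / h\<^sup>2)) / 9))) (at x)" .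
    have "(u has_derivative (\<lambda>v. 0 - 2 * max 0 (1 - \<psi> x) * - (\<Sum>p\<in>P. 2 * max 0 (4 - s p x) * (- (2 * ((x - p) \<bullet> v) / h\<^sup>2)) / 9))) (at x)"
      unfolding u_def by (rule has_derivative_diff[OF has_derivative_const q])
    then show ?thesis
    proof (rule has_derivative_eq_rhs)
      show "(\<lambda>v. 0 - 2 * max 0 (1 - \<psi> x) * - (\<Sum>p\<in>P. 2 * max 0 (4 - s p x) * (- (2 * ((x - p) \<bullet> v) / h\<^sup>2)) / 9))
         = blinfun_apply (D x)"
        by (rule ext) (simp add: Dapp c_def sum_distrib_left algebra_simps)
    qed
  qed
  have contD: "continuous_on UNIV D"
    unfolding D_def c_def \<psi>_def s_def using assms(2) by (intro continuous_intros) auto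
  have C1: "C1_on_UNIV u" unfolding C1_on_UNIV_def using deriv contD by blast
  have u01: "0 \<le> u x \<and> u x \<le> 1" for x
  proof (cases "\<psi> x \<ge> 1")
    case True then show ?thesis by (simp add: u_def qf_def)
  next
    case False
    then have "qf (1 - \<psi> x) = (1 - \<psi> x)\<^sup>2" by (simp add: qf_def)
    moreover have "(1 - \<psi> x)\<^sup>2 \<le> 1" using False \<psi>0[of x] by (simp add: abs_square_le_1)
    ultimately show ?thesis by (simp add: u_def qf_nonneg)
  qed
  have uK: "u x = 1" if xK: "x \<in> K" for x
  proof -
    obtain p where p: "p \<in> P" "dist x p < h" using P(3)[OF xK] by blast
    have r: "0 \<le> dist x p / h" "dist x p / h < 1" using p assms(2) by (auto simp: divide_less_eq_1_pos)
    have "(dist x p / h)\<^sup>2 < 1\<^sup>2" by (rule power_strict_mono) (use r in auto)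
    then have sl: "s p x < 1" by (simp add: s_eq)
    then have m: "max 0 (4 - s p x) = 4 - s p x" by simp
    have "3 * 3 \<le> (4 - s p x) * (4 - s p x)" using sl by (intro mult_mono) auto
    then have "qf (4 - s p x) \<ge> 9" unfolding qf_def m by (simp add: power2_eq_square)
    then have "1 \<le> qf (4 - s p x) / 9" by simp
    also have "\<dots> \<le> \<psi> x" unfolding \<psi>_def
      by (rule member_le_sum[OF p(1)]) (simp_all add: qf_nonneg P(1))
    finally show ?thesis by (simp add: u_def qf_def)
  qed
  have supp: "\<exists>p\<in>K. dist x p < 2 * h" if "u x \<noteq> 0" for x
  proof (rule ccontr)
    assume "\<not> (\<exists>p\<in>K. dist x p < 2 * h)"
    then have far: "\<And>p. p \<in> P \<Longrightarrow> 2 * h \<le> dist x p" using P(2) by force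
    have "qf (4 - s p x) = 0" if "p \<in> P" for p
    proof -
      have "(2 * h / h)\<^sup>2 \<le> (dist x p / h)\<^sup>2"
        using far[OF that] assms(2) by (intro power_mono divide_right_mono) auto
      then have "4 \<le> s p x" using assms(2) by (simp add: s_eq)
      then show ?thesis by (simp add: qf_def)
    qed
    then have "\<psi> x = 0" unfolding \<psi>_def by simp
    then have "u x = 0" by (simp add: u_def qf_def)
    with that show False by simp
  qed
  have term_bound: "\<bar>c p x\<bar> * norm (x - p) \<le> (if dist x p < 2 * h then 64 / (9 * h) else 0)" for p x
  proof (cases "dist x p < 2 * h")
    case False
    then have "(2 * h / h)\<^sup>2 \<le> (dist x p / h)\<^sup>2"
      using assms(2) by (intro power_mono divide_right_mono) auto
    then have "4 \<le> s p x" using assms(2) by (simp add: s_eq)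
    then show ?thesis using False by (simp add: c_def)
  next
    case True
    have a1: "\<bar>2 * max 0 (1 - \<psi> x)\<bar> \<le> 2" using \<psi>0[of x] by simp
    have a2: "\<bar>- (2 * max 0 (4 - s p x)) / 9\<bar> \<le> 8 / 9" using s0[of p x] by simp
    have a3: "norm (x - p) \<le> 2 * h" using True by (simp add: dist_norm)
    have "\<bar>c p x\<bar> * norm (x - p) = \<bar>2 * max 0 (1 - \<psi> x)\<bar> * \<bar>- (2 * max 0 (4 - s p x)) / 9\<bar> * (2 / h\<^sup>2) * norm (x - p)"
      using assms(2) by (simp add: c_def abs_mult)
    also have "\<dots> \<le> 2 * (8 / 9) * (2 / h\<^sup>2) * (2 * h)"
      using a1 a2 a3 assms(2) by (intro mult_mono) auto
    also have "\<dots> = 64 / (9 * h)" using assms(2) by (simp add: power2_eq_square field_simps)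
    finally show ?thesis using True by simp
  qed
  have onorm_bound: "onorm (blinfun_apply (D x)) \<le> 8 * 5 ^ DIM('a) / h" for x
  proof -
    define N where "N = card {p\<in>P. dist x p < 2 * h}"
    have N: "real N \<le> 5 ^ DIM('a)" unfolding N_def using packing[OF assms(2) P(1) sepP, of x]
      by (metis of_nat_le_iff of_nat_numeral of_nat_power)
    have sumb: "(\<Sum>p\<in>P. \<bar>c p x\<bar> * norm (x - p)) \<le> real N * (64 / (9 * h))"
    proof -
      have "(\<Sum>p\<in>P. \<bar>c p x\<bar> * norm (x - p)) \<le> (\<Sum>p\<in>P. (if dist x p < 2 * h then 64 / (9 * h) else 0))"
        by (intro sum_mono term_bound)
      also have "\<dots> = real N * (64 / (9 * h))"
        unfolding N_def using P(1) by (simp add: sum.If_cases Int_def)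
      finally show ?thesis .
    qed
    have "onorm (blinfun_apply (D x)) \<le> (\<Sum>p\<in>P. \<bar>c p x\<bar> * norm (x - p))"
    proof (rule onorm_le)
      fix v
      have "norm (blinfun_apply (D x) v) = \<bar>\<Sum>p\<in>P. c p x * ((x - p) \<bullet> v)\<bar>" by (simp add: Dapp)
      also have "\<dots> \<le> (\<Sum>p\<in>P. \<bar>c p x * ((x - p) \<bullet> v)\<bar>)" by (rule sum_abs)
      also have "\<dots> \<le> (\<Sum>p\<in>P. \<bar>c p x\<bar> * norm (x - p) * norm v)"
        by (intro sum_mono) (simp add: abs_mult mult.assoc mult_left_mono Cauchy_Schwarz_ineq2)
      also have "\<dots> = (\<Sum>p\<in>P. \<bar>c p x\<bar> * norm (x - p)) * norm v" by (simp add: sum_distrib_right)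
      finally show "norm (blinfun_apply (D x) v) \<le> (\<Sum>p\<in>P. \<bar>c p x\<bar> * norm (x - p)) * norm v" .
    qed
    also have "\<dots> \<le> real N * (64 / (9 * h))" by (rule sumb)
    also have "\<dots> \<le> 5 ^ DIM('a) * (64 / (9 * h))" using N assms(2) by (intro mult_right_mono) auto
    also have "\<dots> \<le> 8 * 5 ^ DIM('a) / h" using assms(2) by (simp add: field_simps)
    finally show ?thesis .
  qed
  have lip: "\<bar>u x - u y\<bar> \<le> (8 * 5 ^ DIM('a) / h) * dist x y" for x y
    using differentiable_bound[of UNIV u "\<lambda>x. blinfun_apply (D x)" "8 * 5 ^ DIM('a) / h" x y]
      deriv onorm_bound by (simp add: dist_norm)
  show ?thesis using C1 uK u01 lip supp by blast
qed



lemma C1_cont: "C1_on_UNIV u \<Longrightarrow> continuous_on UNIV u"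
proof -
  assume "C1_on_UNIV u"
  then obtain D where D: "\<And>x. (u has_derivative blinfun_apply (D x)) (at x)"
    unfolding C1_on_UNIV_def by blast
  show ?thesis by (intro continuous_at_imp_continuous_on ballI has_derivative_continuous[OF D])
qed

theorem lemmaA2:
  fixes \<Omega> :: "'a::euclidean_space set" and \<sigma> :: real
  assumes "0 < \<sigma>" and "\<sigma> < 1/2"
    and "open \<Omega>" and "\<Omega> \<noteq> {}"
    and "\<Omega> \<in> sets lebesgue" and "emeasure lebesgue \<Omega> < \<infinity>"
    and "(\<lambda>\<delta>. measure lebesgue {x \<in> \<Omega>. infdist x (- \<Omega>) < \<delta>})
           \<in> o[at_right 0](\<lambda>\<delta>. \<delta> powr (2 * \<sigma>))"
  shows "(INF u \<in> C1c \<Omega> - {\<lambda>x. 0}. Iform \<sigma> \<Omega> u / ennreal (Sobden \<sigma> \<Omega> u)) = 0"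
proof -
  define n where "n = real DIM('a)"
  have n1: "n \<ge> 1" unfolding n_def by (simp add: DIM_positive Suc_le_eq)
  define Kf where "Kf = (\<integral>\<^sup>+ z. ennreal (kern \<sigma> (z::'a)) \<partial>lborel)"
  have Kf_fin: "Kf < \<infinity>" unfolding Kf_def using kern_integral_finite[of \<sigma>] assms(1,2) by simp
  define Kr where "Kr = enn2real Kf"
  have Kf_eq: "Kf = ennreal Kr" unfolding Kr_def using Kf_fin by (simp add: ennreal_enn2real)
  have Kr0: "Kr \<ge> 0" by (simp add: Kr_def)
  define A :: real where "A = 8 * 5 ^ DIM('a)"
  have A0: "A > 0" by (simp add: A_def)
  have \<Omega>b[measurable]: "\<Omega> \<in> sets lborel" using assms(3) by simp
  have \<Omega>fin: "emeasure lborel \<Omega> < \<infinity>" using assms(6) \<Omega>b by simp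
  define m where "m = measure lborel \<Omega>"
  have em\<Omega>: "emeasure lborel \<Omega> = ennreal m"
    unfolding m_def using \<Omega>fin by (simp add: emeasure_eq_ennreal_measure)
  have m_pos: "m > 0"
  proof -
    obtain x where "x \<in> \<Omega>" using assms(4) by blast
    then obtain r where r: "r > 0" "ball x r \<subseteq> \<Omega>" using assms(3) open_contains_ball by blast
    have "0 < ennreal (unit_ball_vol (real DIM('a)) * r ^ DIM('a))" using r by simp
    also have "\<dots> = emeasure lborel (ball x r)" using r by (simp add: emeasure_ball)
    also have "\<dots> \<le> emeasure lborel \<Omega>" by (rule emeasure_mono[OF r(2) \<Omega>b])
    finally show ?thesis using em\<Omega> by simp
  qed
  define q where "q = (n - 2 * \<sigma>) / n"
  define pe where "pe = 2 * n / (n - 2 * \<sigma>)"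
  have q0: "q \<ge> 0" unfolding q_def using n1 assms(2) by simp
  have pe0: "pe \<ge> 0" unfolding pe_def using n1 assms(2) by simp
  define B where "B = m / 2"
  have B0: "B > 0" using m_pos by (simp add: B_def)
  have main: "\<exists>u\<in>C1c \<Omega> - {\<lambda>x. 0}. Iform \<sigma> \<Omega> u / ennreal (Sobden \<sigma> \<Omega> u) \<le> ennreal \<epsilon>"
    if \<epsilon>0: "\<epsilon> > 0" for \<epsilon>
  proof -
    define Cst where "Cst = 2 * (4 * A) powr (2 * \<sigma>) * (Kr + 1)"
    have Cst0: "Cst > 0" unfolding Cst_def using A0 Kr0 by simp
    define \<eta> where "\<eta> = min (m / 2) (\<epsilon> * B powr q / Cst)"
    have \<eta>0: "\<eta> > 0" unfolding \<eta>_def using m_pos \<epsilon>0 B0 Cst0 by simp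
    have "eventually (\<lambda>\<delta>. norm (measure lebesgue {x \<in> \<Omega>. infdist x (- \<Omega>) < \<delta>}) \<le> (\<eta>/2) * norm (\<delta> powr (2 * \<sigma>))) (at_right 0)"
      by (rule landau_o.smallD[OF assms(7)]) (use \<eta>0 in simp)
    then obtain b where b: "b > 0" "\<And>\<delta>. \<delta> > 0 \<Longrightarrow> \<delta> < b \<Longrightarrow>
        norm (measure lebesgue {x \<in> \<Omega>. infdist x (- \<Omega>) < \<delta>}) \<le> (\<eta>/2) * norm (\<delta> powr (2 * \<sigma>))"
      unfolding eventually_at_right_field by auto
    define \<delta> where "\<delta> = min (b / 2) (1 / 2)"
    have \<delta>0: "\<delta> > 0" "\<delta> < b" "\<delta> < 1" unfolding \<delta>_def using b by auto
    define L where "L = {x \<in> \<Omega>. infdist x (- \<Omega>) < \<delta>}"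
    have Lopen: "open L"
    proof -
      have "open {x::'a. infdist x (- \<Omega>) < \<delta>}"
        by (rule open_Collect_less) (auto intro: continuous_on_infdist continuous_on_id continuous_on_const)
      then have "open (\<Omega> \<inter> {x::'a. infdist x (- \<Omega>) < \<delta>})" using assms(3) by auto
      moreover have "L = \<Omega> \<inter> {x::'a. infdist x (- \<Omega>) < \<delta>}" by (auto simp: L_def)
      ultimately show ?thesis by simp
    qed
    have Lm[measurable]: "L \<in> sets lborel" using Lopen by simp
    have LsubO: "L \<subseteq> \<Omega>" by (auto simp: L_def)
    have Lfin: "emeasure lborel L < \<infinity>" using emeasure_mono[OF LsubO \<Omega>b] \<Omega>fin by (rule le_less_trans)
    define tgt where "tgt = (\<eta>/2) * \<delta> powr (2 * \<sigma>)"
    have tgt0: "tgt > 0" unfolding tgt_def using \<eta>0 \<delta>0 by simp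
    have emL: "emeasure lborel L \<le> ennreal tgt"
    proof -
      have "measure lebesgue L = measure lborel L" by (rule measure_completion[OF Lm])
      moreover have "\<bar>measure lebesgue L\<bar> \<le> (\<eta>/2) * \<bar>\<delta> powr (2 * \<sigma>)\<bar>"
        using b(2)[OF \<delta>0(1,2)] by (simp add: L_def)
      ultimately have "measure lborel L \<le> tgt" unfolding tgt_def using \<delta>0 by simp
      then show ?thesis using Lfin by (simp add: emeasure_eq_ennreal_measure ennreal_leI)
    qed
    define T where "T k = \<Omega> - cball 0 (real k)" for k :: nat
    have Tm[measurable]: "T k \<in> sets lborel" for k unfolding T_def by (intro sets.Diff \<Omega>b) (auto intro: borel_closed)
    have Tlim: "(\<lambda>k. emeasure lborel (T k)) \<longlonglongrightarrow> emeasure lborel (\<Inter> (range T))"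
    proof (rule Lim_emeasure_decseq)
      show "range T \<subseteq> sets lborel" using Tm by (simp add: image_subset_iff)
      show "antimono_on UNIV T" unfolding monotone_on_def T_def by auto
      show "emeasure lborel (T k) \<noteq> \<infinity>" for k
        using emeasure_mono[of "T k" \<Omega> lborel, OF _ \<Omega>b] \<Omega>fin by (auto simp: T_def top_unique)
    qed
    have "\<Inter> (range T) = {}"
    proof -
      have "x \<notin> T (nat \<lceil>norm x\<rceil>)" for x :: 'a
        by (auto simp: T_def)
      then show ?thesis by blast
    qed
    then have "(\<lambda>k. emeasure lborel (T k)) \<longlonglongrightarrow> 0" using Tlim by simp
    then have "eventually (\<lambda>k. emeasure lborel (T k) < ennreal tgt) sequentially"
      using tgt0 by (intro order_tendstoD) auto
    then obtain k where k: "emeasure lborel (T k) < ennreal tgt" by (auto dest: eventually_happens)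
    define R where "R = real k"
    define E where "E = L \<union> T k"
    have Em[measurable]: "E \<in> sets lborel" unfolding E_def by (rule sets.Un[OF Lm Tm])
    have emE: "emeasure lborel E \<le> ennreal (\<eta> * \<delta> powr (2 * \<sigma>))"
    proof -
      have "emeasure lborel E \<le> emeasure lborel L + emeasure lborel (T k)"
        unfolding E_def by (rule emeasure_subadditive[OF Lm Tm])
      also have "\<dots> \<le> ennreal tgt + ennreal tgt" using emL k by (intro add_mono) auto
      also have "\<dots> = ennreal (\<eta> * \<delta> powr (2 * \<sigma>))"
        using tgt0 by (simp add: tgt_def ennreal_plus[symmetric] del: ennreal_plus)
      finally show ?thesis .
    qed
    define K where "K = {x::'a. \<delta> \<le> infdist x (- \<Omega>)} \<inter> cball 0 R"
    have Kc: "compact K"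
    proof -
      have "closed {x::'a. \<delta> \<le> infdist x (- \<Omega>)}"
        by (rule closed_Collect_le) (auto intro: continuous_on_infdist continuous_on_id continuous_on_const)
      then show ?thesis unfolding K_def by (intro closed_Int_compact) auto
    qed
    define G where "G = \<Omega> - E"
    have GK: "G \<subseteq> K" by (auto simp: G_def E_def L_def T_def K_def R_def)
    have Gm[measurable]: "G \<in> sets lborel" unfolding G_def by (rule sets.Diff[OF \<Omega>b Em])
    have Gfin: "emeasure lborel G < \<infinity>" using emeasure_mono[of G \<Omega> lborel, OF _ \<Omega>b] \<Omega>fin by (auto simp: G_def)
    have \<delta>pow: "\<delta> powr (2 * \<sigma>) \<le> 1" using \<delta>0 assms(1) by (intro powr_le1) auto
    have measG: "measure lborel G \<ge> B"
    proof -
      have "emeasure lborel \<Omega> \<le> emeasure lborel (G \<union> E)"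
        by (rule emeasure_mono[OF _ sets.Un[OF Gm Em]]) (auto simp: G_def)
      also have "\<dots> \<le> emeasure lborel G + emeasure lborel E" by (rule emeasure_subadditive[OF Gm Em])
      also have "\<dots> \<le> ennreal (measure lborel G) + ennreal (\<eta> * \<delta> powr (2 * \<sigma>))"
        using emE Gfin by (intro add_mono) (auto simp: emeasure_eq_ennreal_measure)
      also have "\<dots> = ennreal (measure lborel G + \<eta> * \<delta> powr (2 * \<sigma>))"
        using \<eta>0 \<delta>0 by (simp add: ennreal_plus)
      finally have c: "emeasure lborel \<Omega> \<le> ennreal (measure lborel G + \<eta> * \<delta> powr (2 * \<sigma>))" .
      have X0: "0 \<le> measure lborel G + \<eta> * \<delta> powr (2 * \<sigma>)" using \<eta>0 by simp
      have "m \<le> measure lborel G + \<eta> * \<delta> powr (2 * \<sigma>)"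
        using ennreal_le_iff[OF X0, THEN iffD1] c em\<Omega> by simp
      moreover have "\<eta> * \<delta> powr (2 * \<sigma>) \<le> \<eta>" using \<delta>pow \<eta>0 by (simp add: mult_left_le)
      moreover have "\<eta> \<le> m / 2" unfolding \<eta>_def by (rule min.cobounded1)
      ultimately show ?thesis unfolding B_def by simp
    qed
    then have "G \<noteq> {}" using B0 by auto
    then obtain g where g: "g \<in> G" by blast
    define h where "h = \<delta> / 4"
    have h0: "h > 0" using \<delta>0 by (simp add: h_def)
    obtain u where uC1: "C1_on_UNIV u" and uK: "\<forall>x\<in>K. u x = 1" and u01: "\<forall>x. 0 \<le> u x \<and> u x \<le> 1"
      and ulip: "\<forall>x y. \<bar>u x - u y\<bar> \<le> (8 * 5 ^ DIM('a) / h) * dist x y"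
      and usupp: "\<forall>x. u x \<noteq> 0 \<longrightarrow> (\<exists>p\<in>K. dist x p < 2 * h)"
      using cutoff[OF Kc h0] by blast
    have ucont: "continuous_on UNIV u" by (rule C1_cont[OF uC1])
    define S where "S = {x::'a. \<delta> / 2 \<le> infdist x (- \<Omega>)} \<inter> cball 0 (R + \<delta>)"
    have Sclosed: "closed S"
    proof -
      have "closed {x::'a. \<delta> / 2 \<le> infdist x (- \<Omega>)}"
        by (rule closed_Collect_le) (auto intro: continuous_on_infdist continuous_on_id continuous_on_const)
      then show ?thesis unfolding S_def by auto
    qed
    have suppS: "{x. u x \<noteq> 0} \<subseteq> S"
    proof
      fix x assume "x \<in> {x. u x \<noteq> 0}"
      then obtain p where p: "p \<in> K" "dist x p < 2 * h" using usupp by auto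
      have "infdist p (- \<Omega>) \<le> infdist x (- \<Omega>) + dist p x" by (rule infdist_triangle)
      moreover have "\<delta> \<le> infdist p (- \<Omega>)" using p(1) by (simp add: K_def)
      moreover have "dist p x < \<delta> / 2" using p(2) by (simp add: h_def dist_commute)
      ultimately have i: "\<delta> / 2 \<le> infdist x (- \<Omega>)" by simp
      have "norm x \<le> norm p + dist x p" by (metis dist_norm norm_triangle_sub add.commute)
      moreover have "norm p \<le> R" using p(1) by (simp add: K_def)
      ultimately have "norm x \<le> R + \<delta>" using p(2) h0 by (simp add: h_def)
      then show "x \<in> S" using i by (simp add: S_def)
    qed
    have SO: "S \<subseteq> \<Omega>"
    proof
      fix x assume "x \<in> S"
      then have "\<delta> / 2 \<le> infdist x (- \<Omega>)" by (simp add: S_def)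
      then have "infdist x (- \<Omega>) \<noteq> 0" using \<delta>0 by simp
      then show "x \<in> \<Omega>" using infdist_zero[of x "- \<Omega>"] by (metis ComplI)
    qed
    have clS: "closure {x. u x \<noteq> 0} \<subseteq> S" using suppS Sclosed by (rule closure_minimal)
    have bS: "bounded {x. u x \<noteq> 0}"
      using suppS by (rule bounded_subset[rotated]) (simp add: S_def bounded_Int)
    have uC1c: "u \<in> C1c \<Omega>" unfolding C1c_def
      using uC1 clS SO bS compact_closure by blast
    have ug: "u g = 1" using uK GK g by auto
    have unz: "u \<noteq> (\<lambda>x. 0)" using ug by (metis one_neq_zero)
    define M where "M = A / h"
    have M0: "M > 0" using A0 h0 by (simp add: M_def)
    have Ib: "Iform \<sigma> \<Omega> u \<le> 2 * emeasure lborel E * (ennreal (M powr (2 * \<sigma>)) * Kf)"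
      unfolding Kf_def
    proof (rule Iform_bound[OF M0 _ _ Em])
      show "\<bar>u x - u y\<bar> \<le> M * dist x y" for x y using ulip by (simp add: M_def A_def)
      show "\<bar>u x - u y\<bar> \<le> 1" for x y using u01[rule_format, of x] u01[rule_format, of y] by auto
      show "u x = u y" if "x \<in> \<Omega>" "y \<in> \<Omega>" "x \<notin> E" "y \<notin> E" for x y
      proof -
        have "x \<in> K" "y \<in> K" using that GK unfolding G_def by blast+
        then show ?thesis using uK by simp
      qed
    qed
    have Mdelta: "M powr (2 * \<sigma>) * \<delta> powr (2 * \<sigma>) = (4 * A) powr (2 * \<sigma>)"
      using \<delta>0 A0 h0 by (simp add: powr_mult[symmetric] M_def h_def mult.commute)
    have Iform_le: "Iform \<sigma> \<Omega> u \<le> ennreal (\<epsilon> * B powr q)"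
    proof -
      have "Iform \<sigma> \<Omega> u \<le> 2 * ennreal (\<eta> * \<delta> powr (2 * \<sigma>)) * (ennreal (M powr (2 * \<sigma>)) * ennreal Kr)"
        using Ib emE unfolding Kf_eq by (smt (verit) mult_right_mono mult_left_mono zero_le order_trans)
      also have "\<dots> = ennreal (2 * \<eta> * (M powr (2 * \<sigma>) * \<delta> powr (2 * \<sigma>)) * Kr)"
      proof -
        have two: "(2::ennreal) * ennreal x = ennreal (2 * x)" for x :: real
          by (cases "x \<ge> 0") (auto simp: ennreal_mult ennreal_neg)
        show ?thesis using \<eta>0 Kr0 by (simp add: ennreal_mult[symmetric] two mult_ac)
      qed
      also have "\<dots> = ennreal (\<eta> * (2 * (4 * A) powr (2 * \<sigma>) * Kr))" by (simp only: Mdelta[symmetric]) (simp add: mult_ac)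
      also have "\<dots> \<le> ennreal (\<eta> * Cst)"
        unfolding Cst_def using \<eta>0 A0 by (intro ennreal_leI mult_left_mono) auto
      also have "\<dots> \<le> ennreal (\<epsilon> * B powr q)"
      proof (rule ennreal_leI)
        have "\<eta> \<le> \<epsilon> * B powr q / Cst" unfolding \<eta>_def by simp
        then show "\<eta> * Cst \<le> \<epsilon> * B powr q" using Cst0 by (simp add: field_simps)
      qed
      finally show ?thesis .
    qed
    define f where "f x = \<bar>u x\<bar> powr pe" for x
    have fm[measurable]: "f \<in> borel_measurable lborel"
      unfolding f_def using borel_measurable_continuous_onI[OF ucont] by measurable
    have f1: "\<bar>f x\<bar> \<le> 1" for x
      using u01[rule_format, of x] pe0 by (simp add: f_def powr_le1)
    have fint: "integrable lborel (\<lambda>x. indicator \<Omega> x *\<^sub>R f x)"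
      by (rule integrableI_bounded_set_indicator[where B=1, OF \<Omega>b fm]) (use \<Omega>fin f1 in auto)
    have Gint: "integrable lborel (indicator G :: 'a \<Rightarrow> real)"
      using Gfin Gm by (simp add: integrable_indicator_iff)
    have "measure lborel G = (LINT x|lborel. indicator G x)"
      using Gfin Gm by (simp add: Bochner_Integration.integral_indicator)
    also have "\<dots> \<le> (LINT x|lborel. indicator \<Omega> x *\<^sub>R f x)"
    proof (rule integral_mono[OF Gint fint])
      fix x
      show "indicator G x \<le> indicator \<Omega> x *\<^sub>R f x"
      proof (cases "x \<in> G")
        case True
        then have "u x = 1" using GK uK by auto
        then show ?thesis using True by (simp add: f_def G_def)
      next
        case False then show ?thesis by (simp add: f_def indicator_def)
      qed
    qed
    finally have Ilow: "B \<le> (LINT x:\<Omega>|lborel. f x)"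
      using measG by (simp add: set_lebesgue_integral_def)
    have Sob: "Sobden \<sigma> \<Omega> u = (LINT x:\<Omega>|lborel. f x) powr q"
      unfolding Sobden_def f_def pe_def q_def n_def by simp
    have Sob_low: "B powr q \<le> Sobden \<sigma> \<Omega> u"
      unfolding Sob using Ilow B0 q0 by (intro powr_mono2) auto
    have Bq0: "B powr q > 0" using B0 by simp
    have Sob0: "Sobden \<sigma> \<Omega> u > 0" using Bq0 Sob_low by linarith
    have "Iform \<sigma> \<Omega> u / ennreal (Sobden \<sigma> \<Omega> u) \<le> ennreal (\<epsilon> * B powr q) / ennreal (Sobden \<sigma> \<Omega> u)"
      by (rule divide_right_mono_ennreal[OF Iform_le])
    also have "\<dots> = ennreal (\<epsilon> * B powr q / Sobden \<sigma> \<Omega> u)"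
      using \<epsilon>0 Bq0 Sob0 by (intro divide_ennreal) auto
    also have "\<dots> \<le> ennreal \<epsilon>"
    proof (rule ennreal_leI)
      show "\<epsilon> * B powr q / Sobden \<sigma> \<Omega> u \<le> \<epsilon>"
        using \<epsilon>0 Bq0 Sob0 Sob_low by (simp add: divide_le_eq)
    qed
    finally show ?thesis using uC1c unz by blast
  qed
  have "(INF u \<in> C1c \<Omega> - {\<lambda>x. 0}. Iform \<sigma> \<Omega> u / ennreal (Sobden \<sigma> \<Omega> u)) \<le> 0"
  proof (rule ennreal_le_epsilon)
    fix e :: real assume "0 < e"
    then obtain u where u: "u \<in> C1c \<Omega> - {\<lambda>x. 0}" "Iform \<sigma> \<Omega> u / ennreal (Sobden \<sigma> \<Omega> u) \<le> ennreal e"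
      using main by blast
    have "(INF u \<in> C1c \<Omega> - {\<lambda>x. 0}. Iform \<sigma> \<Omega> u / ennreal (Sobden \<sigma> \<Omega> u)) \<le> Iform \<sigma> \<Omega> u / ennreal (Sobden \<sigma> \<Omega> u)"
      by (rule INF_lower[OF u(1)])
    also have "\<dots> \<le> ennreal e" by (rule u(2))
    finally show "(INF u \<in> C1c \<Omega> - {\<lambda>x. 0}. Iform \<sigma> \<Omega> u / ennreal (Sobden \<sigma> \<Omega> u)) \<le> 0 + ennreal e" by simp
  qed
  then show ?thesis by (simp add: antisym)
qed

end
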